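(* Let $Y$ be a real random variable with $\mathbb E[Y]=0$ such that for some $\theta>0$, $\Pr[|Y|\ge\xi]\le 2e^{-\xi^2\theta^2/2}$ for all $\xi\ge0$. Then for every $a>0$, $$\Pr[Y\ge0]\ge\frac{\operatorname{Var}[Y]}{2a^2}-2e^{-a^2\theta^2/2}\left(1+\sqrt2+\frac{\sqrt{2\pi}}{a\theta}+\frac{1}{a^2\theta^2}\right).$$ *)

theory Defs
  imports "HOL-Probability.Probability"
begin

end

theory Submission imports Defs begin

lemma layer_cake:
  fixes M :: "'a measure" and X :: "'a \<Rightarrow> real"
  assumes sf: "sigma_finite_measure M" and X[measurable]: "X \<in> borel_measurable M"
    and nn: "\<And>x. x \<in> space M \<Longrightarrow> X x \<ge> 0"
  shows "(\<integral>\<^sup>+x. ennreal (X x) \<partial>M) =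
     (\<integral>\<^sup>+t. emeasure M {x\<in>space M. t < X x} * indicator {0..} t \<partial>lborel)"
proof -
  interpret pair_sigma_finite M lborel
    using sf by (simp add: pair_sigma_finite_def lborel.sigma_finite_measure_axioms)
  define f where "f = (\<lambda>x (t::real). (if 0 \<le> t \<and> t < X x then 1 else 0) :: ennreal)"
  have fm: "case_prod f \<in> borel_measurable (M \<Otimes>\<^sub>M lborel)"
    unfolding f_def by measurable
  have 1: "(\<integral>\<^sup>+t. f x t \<partial>lborel) = ennreal (X x)" if "x \<in> space M" for x
  proof -
    have "(\<integral>\<^sup>+t. f x t \<partial>lborel) = (\<integral>\<^sup>+t. indicator {0..<X x} t \<partial>lborel)"
      by (rule nn_integral_cong) (auto simp: f_def indicator_def)
    also have "\<dots> = ennreal (X x)" using nn[OF that] by simp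
    finally show ?thesis .
  qed
  have 2: "(\<integral>\<^sup>+x. f x t \<partial>M) = emeasure M {x\<in>space M. t < X x} * indicator {0..} t" for t
  proof -
    have "(\<integral>\<^sup>+x. f x t \<partial>M) = (\<integral>\<^sup>+x. indicator {0..} t * indicator {x\<in>space M. t < X x} x \<partial>M)"
      by (rule nn_integral_cong) (auto simp: f_def indicator_def)
    also have "\<dots> = indicator {0..} t * emeasure M {x\<in>space M. t < X x}"
      by (rule nn_integral_cmult_indicator) measurable
    finally show ?thesis by (simp add: mult.commute)
  qed
  have "(\<integral>\<^sup>+x. ennreal (X x) \<partial>M) = (\<integral>\<^sup>+x. (\<integral>\<^sup>+t. f x t \<partial>lborel) \<partial>M)"
    by (rule nn_integral_cong) (simp add: 1)
  also have "\<dots> = (\<integral>\<^sup>+t. (\<integral>\<^sup>+x. f x t \<partial>M) \<partial>lborel)"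
    using Fubini'[OF fm] by simp
  also have "\<dots> = (\<integral>\<^sup>+t. emeasure M {x\<in>space M. t < X x} * indicator {0..} t \<partial>lborel)"
    by (simp add: 2)
  finally show ?thesis .
qed


lemma tail_bound:
  fixes M :: "'a measure" and Y :: "'a \<Rightarrow> real" and \<theta> A :: real
  assumes P: "prob_space M"
    and Ym[measurable]: "Y \<in> borel_measurable M"
    and th: "\<theta> > 0"
    and tail: "\<And>\<xi>. \<xi> \<ge> 0 \<Longrightarrow>
           measure M {x \<in> space M. \<bar>Y x\<bar> \<ge> \<xi>} \<le> 2 * exp (- (\<xi>\<^sup>2 * \<theta>\<^sup>2 / 2))"
    and A: "A \<ge> 0"
  shows "(\<integral>\<^sup>+x. ennreal (if (Y x)\<^sup>2 > A then (Y x)\<^sup>2 else 0) \<partial>M)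
     \<le> ennreal (2 * exp (- (\<theta>\<^sup>2/2) * A) * (A + 1 / (\<theta>\<^sup>2/2)))"
proof -
  interpret prob_space M by (rule P)
  define c where "c = \<theta>\<^sup>2/2"
  have c: "c > 0" using th by (simp add: c_def)
  define X where "X = (\<lambda>x. if (Y x)\<^sup>2 > A then (Y x)\<^sup>2 else 0)"
  have Xm[measurable]: "X \<in> borel_measurable M" unfolding X_def by measurable
  have lc: "(\<integral>\<^sup>+x. ennreal (X x) \<partial>M) =
     (\<integral>\<^sup>+t. emeasure M {x\<in>space M. t < X x} * indicator {0..} t \<partial>lborel)"
    by (rule layer_cake) (auto simp: X_def prob_space_imp_sigma_finite P)
  have pt: "emeasure M {x\<in>space M. t < X x} \<le> ennreal (2 * exp (- c * max t A))" if "t \<ge> 0" for t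
  proof -
    have sub: "{x\<in>space M. t < X x} \<subseteq> {x \<in> space M. \<bar>Y x\<bar> \<ge> sqrt (max t A)}"
    proof safe
      fix x assume "x \<in> space M" "t < X x"
      then have "(Y x)\<^sup>2 > A" "(Y x)\<^sup>2 > t" using that A by (auto simp: X_def split: if_splits)
      then have "sqrt (max t A) \<le> sqrt ((Y x)\<^sup>2)" by (intro real_sqrt_le_mono) auto
      then show "sqrt (max t A) \<le> \<bar>Y x\<bar>" by simp
    qed
    have "emeasure M {x\<in>space M. t < X x} \<le> emeasure M {x \<in> space M. \<bar>Y x\<bar> \<ge> sqrt (max t A)}"
      by (rule emeasure_mono[OF sub]) measurable
    also have "\<dots> = ennreal (measure M {x \<in> space M. \<bar>Y x\<bar> \<ge> sqrt (max t A)})"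
      by (simp add: emeasure_eq_measure)
    also have "\<dots> \<le> ennreal (2 * exp (- ((sqrt (max t A))\<^sup>2 * \<theta>\<^sup>2 / 2)))"
      using that A by (intro ennreal_leI tail) simp
    also have "(sqrt (max t A))\<^sup>2 = max t A" using that A by simp
    also have "- (max t A * \<theta>\<^sup>2 / 2) = - c * max t A" by (simp add: c_def)
    finally show ?thesis .
  qed
  have "(\<integral>\<^sup>+t. emeasure M {x\<in>space M. t < X x} * indicator {0..} t \<partial>lborel)
      \<le> (\<integral>\<^sup>+t. ennreal (2 * exp (- c * max t A)) * indicator {0..} t \<partial>lborel)"
    using pt by (intro nn_integral_mono) (auto simp: indicator_def)
  also have "\<dots> = (\<integral>\<^sup>+t. ennreal (2 * exp (- c * A)) * indicator {0..<A} t
        + ennreal (2 * exp (- c * t)) * indicator {A..} t \<partial>lborel)"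
    using A by (intro nn_integral_cong) (auto simp: indicator_def max_def)
  also have "\<dots> = (\<integral>\<^sup>+t. ennreal (2 * exp (- c * A)) * indicator {0..<A} t \<partial>lborel)
        + (\<integral>\<^sup>+t. ennreal (2 * exp (- c * t)) * indicator {A..} t \<partial>lborel)"
    by (rule nn_integral_add) auto
  also have "(\<integral>\<^sup>+t. ennreal (2 * exp (- c * A)) * indicator {0..<A} t \<partial>lborel)
       = ennreal (2 * exp (- c * A)) * ennreal A"
    using A by (subst nn_integral_cmult_indicator) auto
  also have "(\<integral>\<^sup>+t. ennreal (2 * exp (- c * t)) * indicator {A..} t \<partial>lborel)
       = ennreal (2 * (exp (- c * A) / c))"
    using has_integral_mult_right[OF has_integral_exp_minus_to_infinity[OF c, of A], of 2]
    by (intro nn_integral_has_integral_lebesgue') auto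
  also have "ennreal (2 * exp (- c * A)) * ennreal A + ennreal (2 * (exp (- c * A) / c))
       = ennreal (2 * exp (- c * A) * (A + 1 / c))"
    using A c by (simp add: ennreal_mult[symmetric] ennreal_plus[symmetric] algebra_simps del: ennreal_plus)
  finally show ?thesis using lc by (simp add: X_def c_def)
qed

lemma arith_core:
  fixes b e K :: real
  assumes b: "b > 0" "b < 1" and e: "e \<ge> 1 - b\<^sup>2/2" and K: "K \<ge> 2 + 2/b + 1/b\<^sup>2"
  shows "1 / b\<^sup>2 \<le> e * K"
proof -
  have b2: "b\<^sup>2 \<le> b" using b by (simp add: power2_eq_square mult_left_le_one_le)
  have b3: "b^3 \<le> b\<^sup>2" using b by (simp add: power2_eq_square power3_eq_cube mult_left_le_one_le)
  have b4: "b^4 \<le> b\<^sup>2" using b b2 by (simp add: power2_eq_square power4_eq_xxxx mult_left_le_one_le mult_le_one)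
  have eq: "(1 - b\<^sup>2/2) * (2*b\<^sup>2 + 2*b + 1) = 1 + 2*b + 3/2*b\<^sup>2 - b^3 - b^4"
    by (simp add: algebra_simps power2_eq_square power3_eq_cube power4_eq_xxxx)
  have "1 \<le> (1 - b\<^sup>2/2) * (2*b\<^sup>2 + 2*b + 1)" unfolding eq using b b2 b3 b4 by linarith
  also have "(2*b\<^sup>2 + 2*b + 1) = b\<^sup>2 * (2 + 2/b + 1/b\<^sup>2)" using b by (simp add: field_simps power2_eq_square)
  also have "(1 - b\<^sup>2/2) * (b\<^sup>2 * (2 + 2/b + 1/b\<^sup>2)) \<le> e * (b\<^sup>2 * K)"
  proof (rule mult_mono)
    show "0 \<le> e" using e b2 b by linarith
    show "b\<^sup>2 * (2 + 2 / b + 1 / b\<^sup>2) \<le> b\<^sup>2 * K" using K by (intro mult_left_mono) auto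
    show "0 \<le> b\<^sup>2 * (2 + 2 / b + 1 / b\<^sup>2)" using b by auto
  qed (use e in auto)
  finally have "1 \<le> b\<^sup>2 * (e * K)" by (simp add: algebra_simps)
  then show ?thesis using b by (simp add: field_simps)
qed


lemma arith_final:
  fixes a \<theta> p V E :: real
  assumes a: "a > 0" and th: "\<theta> > 0" and p: "p \<ge> 0"
    and V0: "V \<le> 2 * exp (- (\<theta>\<^sup>2/2) * 0) * (0 + 1 / (\<theta>\<^sup>2/2))"
    and VE: "V \<le> 2 * a\<^sup>2 * p + 2 * E"
    and E: "E \<le> 2 * exp (- (\<theta>\<^sup>2/2) * a\<^sup>2) * (a\<^sup>2 + 1 / (\<theta>\<^sup>2/2))"
  shows "p \<ge> V / (2 * a\<^sup>2)
           - 2 * exp (- (a\<^sup>2 * \<theta>\<^sup>2 / 2)) *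
             (1 + sqrt 2 + sqrt (2 * pi) / (a * \<theta>) + 1 / (a\<^sup>2 * \<theta>\<^sup>2))"
proof -
  define b where "b = a * \<theta>"
  have b: "b > 0" using a th by (simp add: b_def)
  have b2: "a\<^sup>2 * \<theta>\<^sup>2 = b\<^sup>2" by (simp add: b_def power_mult_distrib)
  define e where "e = exp (- (b\<^sup>2 / 2))"
  have e0: "e > 0" by (simp add: e_def)
  define K where "K = 1 + sqrt 2 + sqrt (2 * pi) / b + 1 / b\<^sup>2"
  have eE: "exp (- (\<theta>\<^sup>2/2) * a\<^sup>2) = e" unfolding e_def using b2 by (simp add: algebra_simps)
  have goal: "?thesis \<longleftrightarrow> p \<ge> V / (2 * a\<^sup>2) - 2 * e * K"
    unfolding e_def K_def b2 b_def by simp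
  have V0': "V \<le> 4 / \<theta>\<^sup>2" using V0 by simp
  show ?thesis unfolding goal
  proof (cases "1 / b\<^sup>2 \<le> sqrt 2 + sqrt (2 * pi) / b")
    case True
    have "E / a\<^sup>2 \<le> 2 * e * (a\<^sup>2 + 2 / \<theta>\<^sup>2) / a\<^sup>2"
      using E a unfolding eE by (intro divide_right_mono) auto
    also have "\<dots> = 2 * e * (1 + 2 / b\<^sup>2)"
      using a th by (simp add: b_def field_simps power_mult_distrib)
    also have "\<dots> \<le> 2 * e * K" using True e0 by (intro mult_left_mono) (auto simp: K_def)
    finally have "E / a\<^sup>2 \<le> 2 * e * K" .
    moreover have "V / (2 * a\<^sup>2) \<le> p + E / a\<^sup>2"
      using VE a by (simp add: field_simps)
    ultimately show "p \<ge> V / (2 * a\<^sup>2) - 2 * e * K" by linarith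
  next
    case False
    have "sqrt 2 \<ge> 1" by simp
    have b1: "b < 1"
    proof (rule ccontr)
      assume "\<not> b < 1"
      then have "1 / b\<^sup>2 \<le> 1" using b by (simp add: field_simps one_le_power)
      moreover have "sqrt (2*pi) / b \<ge> 0" using b by simp
      ultimately show False using False \<open>sqrt 2 \<ge> 1\<close> by linarith
    qed
    have e1: "e \<ge> 1 - b\<^sup>2/2" unfolding e_def using exp_ge_add_one_self[of "- (b\<^sup>2 / 2)"] by simp
    have "sqrt (2*pi) \<ge> sqrt 4" using pi_gt3 by (intro real_sqrt_le_mono) simp
    then have sp: "sqrt (2*pi) \<ge> 2" by simp
    have "sqrt (2*pi) / b \<ge> 2 / b" using sp b by (simp add: divide_right_mono)
    then have K: "K \<ge> 2 + 2/b + 1/b\<^sup>2" unfolding K_def using \<open>sqrt 2 \<ge> 1\<close> by linarith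
    have core: "1 / b\<^sup>2 \<le> e * K" by (rule arith_core[OF b b1 e1 K])
    have "V / (2 * a\<^sup>2) \<le> (4 / \<theta>\<^sup>2) / (2 * a\<^sup>2)" using V0' a by (intro divide_right_mono) auto
    also have "\<dots> = 2 / b\<^sup>2" using a th by (simp add: b_def field_simps power_mult_distrib)
    finally show "p \<ge> V / (2 * a\<^sup>2) - 2 * e * K" using core p by linarith
  qed
qed

theorem lemma6:
  fixes M :: "'a measure" and Y :: "'a \<Rightarrow> real" and \<theta> a :: real
  assumes "prob_space M"
    and "Y \<in> borel_measurable M"
    and "prob_space.expectation M Y = 0"
    and "\<theta> > 0"
    and "\<And>\<xi>. \<xi> \<ge> 0 \<Longrightarrow>
           measure M {x \<in> space M. \<bar>Y x\<bar> \<ge> \<xi>} \<le> 2 * exp (- (\<xi>\<^sup>2 * \<theta>\<^sup>2 / 2))"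
    and "a > 0"
  shows "measure M {x \<in> space M. Y x \<ge> 0} \<ge>
           prob_space.variance M Y / (2 * a\<^sup>2)
           - 2 * exp (- (a\<^sup>2 * \<theta>\<^sup>2 / 2)) *
             (1 + sqrt 2 + sqrt (2 * pi) / (a * \<theta>) + 1 / (a\<^sup>2 * \<theta>\<^sup>2))"
proof -
  interpret prob_space M by (rule assms(1))
  note Ym[measurable] = assms(2)
  have a: "a > 0" and th: "\<theta> > 0" using assms(4,6) by auto
  define X where "X = (\<lambda>x. if (Y x)\<^sup>2 > a\<^sup>2 then (Y x)\<^sup>2 else 0)"
  have Xm[measurable]: "X \<in> borel_measurable M" unfolding X_def by measurable
  define B1 where "B1 = 2 * exp (- (\<theta>\<^sup>2/2) * a\<^sup>2) * (a\<^sup>2 + 1 / (\<theta>\<^sup>2/2))"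
  define B0 where "B0 = 2 * exp (- (\<theta>\<^sup>2/2) * 0) * (0 + 1 / (\<theta>\<^sup>2/2))"
  have nX: "(\<integral>\<^sup>+x. ennreal (X x) \<partial>M) \<le> ennreal B1"
    unfolding X_def B1_def by (rule tail_bound[OF assms(1,2,4)], rule assms(5), assumption, simp)
  have nY: "(\<integral>\<^sup>+x. ennreal ((Y x)\<^sup>2) \<partial>M) \<le> ennreal B0"
  proof -
    have "(\<integral>\<^sup>+x. ennreal ((Y x)\<^sup>2) \<partial>M) = (\<integral>\<^sup>+x. ennreal (if (Y x)\<^sup>2 > 0 then (Y x)\<^sup>2 else 0) \<partial>M)"
      by (rule nn_integral_cong) simp
    also have "\<dots> \<le> ennreal B0"
      unfolding B0_def by (rule tail_bound[OF assms(1,2,4)], rule assms(5), assumption, simp)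
    finally show ?thesis .
  qed
  have X0: "\<And>x. X x \<ge> 0" by (simp add: X_def)
  have iX: "integrable M X"
    using nX X0 by (intro integrableI_nonneg) (auto simp: top.not_eq_extremum intro: le_less_trans)
  have EX: "expectation X \<le> B1"
  proof -
    have "ennreal (expectation X) \<le> ennreal B1"
      using nX nn_integral_eq_integral[OF iX] X0 by simp
    moreover have "B1 \<ge> 0" unfolding B1_def using th by simp
    ultimately show ?thesis by (simp add: ennreal_le_iff)
  qed
  have iY2: "integrable M (\<lambda>x. (Y x)\<^sup>2)"
    using nY by (intro integrableI_nonneg) (auto simp: top.not_eq_extremum intro: le_less_trans)
  have EY2: "expectation (\<lambda>x. (Y x)\<^sup>2) \<le> B0"
  proof -
    have "ennreal (expectation (\<lambda>x. (Y x)\<^sup>2)) \<le> ennreal B0"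
      using nY nn_integral_eq_integral[OF iY2] by simp
    moreover have "B0 \<ge> 0" unfolding B0_def using th by simp
    ultimately show ?thesis by (simp add: ennreal_le_iff)
  qed
  have iY: "integrable M Y"
  proof (rule Bochner_Integration.integrable_bound[where f="\<lambda>x. 1 + (Y x)\<^sup>2"])
    show "integrable M (\<lambda>x. 1 + (Y x)\<^sup>2)" using iY2 by simp
    show "AE x in M. norm (Y x) \<le> norm (1 + (Y x)\<^sup>2)"
    proof (rule AE_I2)
      fix x
      have "\<bar>Y x\<bar> \<le> 1 + (Y x)\<^sup>2"
      proof (cases "\<bar>Y x\<bar> \<le> 1")
        case True
        then show ?thesis by (smt (verit) zero_le_power2)
      next
        case False
        then have "\<bar>Y x\<bar> * 1 \<le> \<bar>Y x\<bar> * \<bar>Y x\<bar>" by (intro mult_left_mono) auto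
        also have "\<bar>Y x\<bar> * \<bar>Y x\<bar> = (Y x)\<^sup>2" by (simp add: power2_eq_square)
        finally show ?thesis by simp
      qed
      then show "norm (Y x) \<le> norm (1 + (Y x)\<^sup>2)" by simp
    qed
  qed simp
  define S where "S = {x \<in> space M. Y x \<ge> 0}"
  have Sm[measurable]: "S \<in> sets M" unfolding S_def by measurable
  have pw: "(Y x)\<^sup>2 \<le> 2 * a\<^sup>2 * indicator S x - a * Y x + 2 * X x" if "x \<in> space M" for x
  proof -
    have "(Y x)\<^sup>2 \<le> 2 * a\<^sup>2 * (if Y x \<ge> 0 then 1 else 0) - a * Y x + 2 * (if (Y x)\<^sup>2 > a\<^sup>2 then (Y x)\<^sup>2 else 0)"
    proof (cases "Y x \<ge> 0")
      case True
      then show ?thesis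
      proof (cases "Y x \<le> a")
        case True
        then have "(Y x)\<^sup>2 \<le> a * Y x" using \<open>Y x \<ge> 0\<close> by (simp add: power2_eq_square mult_right_mono)
        moreover have "a * Y x \<le> a * a" using True a by simp
        ultimately have H: "(Y x)\<^sup>2 \<le> 2 * a\<^sup>2 - a * Y x" by (simp add: power2_eq_square)
        have i1: "(if 0 \<le> Y x then 1 else 0) = (1::real)" using \<open>Y x \<ge> 0\<close> by simp
        have i2: "0 \<le> (if a\<^sup>2 < (Y x)\<^sup>2 then (Y x)\<^sup>2 else 0)" by simp
        show ?thesis unfolding i1 using i2 H by linarith
      next
        case False
        then have "(Y x)\<^sup>2 > a\<^sup>2" using a by (simp add: power_strict_mono)
        moreover have "a * Y x \<le> Y x * Y x" using False a by (simp add: mult_right_mono)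
        ultimately have i2: "(if a\<^sup>2 < (Y x)\<^sup>2 then (Y x)\<^sup>2 else 0) = (Y x)\<^sup>2" and H: "a * Y x \<le> (Y x)\<^sup>2"
          by (auto simp: power2_eq_square)
        have i1: "(if 0 \<le> Y x then 1 else 0) = (1::real)" using \<open>Y x \<ge> 0\<close> by simp
        have "0 \<le> a\<^sup>2" by simp
        then show ?thesis unfolding i1 i2 using H by linarith
      qed
    next
      case False
      show ?thesis
      proof (cases "(Y x)\<^sup>2 > a\<^sup>2")
        case True
        have "0 \<le> - a * Y x" using False a by (simp add: mult_nonneg_nonpos)
        then have "a * Y x \<le> (Y x)\<^sup>2" using zero_le_power2[of "Y x"] by linarith
        then show ?thesis using True False by auto
      next
        case nt: False
        then have "\<bar>Y x\<bar> \<le> \<bar>a\<bar>" using abs_le_square_iff[of "Y x" a] by simp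
        then have ya: "\<bar>Y x\<bar> \<le> a" using a by simp
        have "\<bar>Y x\<bar> * \<bar>Y x\<bar> \<le> a * \<bar>Y x\<bar>" by (rule mult_right_mono[OF ya]) simp
        moreover have "(Y x)\<^sup>2 = \<bar>Y x\<bar> * \<bar>Y x\<bar>" by (simp add: power2_eq_square)
        moreover have "\<bar>Y x\<bar> = - Y x" using False by simp
        ultimately have H: "(Y x)\<^sup>2 \<le> - a * Y x" by simp
        have i1: "(if 0 \<le> Y x then 1 else 0) = (0::real)" using False by simp
        have i2: "(if a\<^sup>2 < (Y x)\<^sup>2 then (Y x)\<^sup>2 else 0) = 0" using nt by simp
        show ?thesis unfolding i1 i2 using H by simp
      qed
    qed
    moreover have "indicator S x = (if 0 \<le> Y x then 1 else (0::real))" using that by (simp add: S_def indicator_def)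
    ultimately show ?thesis unfolding X_def by simp
  qed
  have iS: "integrable M (indicator S :: 'a \<Rightarrow> real)"
    using Sm by (intro integrable_real_indicator) (auto simp: emeasure_eq_measure)
  have iR: "integrable M (\<lambda>x. 2 * a\<^sup>2 * indicator S x - a * Y x + 2 * X x)"
    by (intro Bochner_Integration.integrable_add Bochner_Integration.integrable_diff
        integrable_mult_right iS iY iX)
  have "expectation (\<lambda>x. (Y x)\<^sup>2) \<le> expectation (\<lambda>x. 2 * a\<^sup>2 * indicator S x - a * Y x + 2 * X x)"
    using pw iY2 iR by (intro integral_mono_AE) (auto intro!: AE_I2)
  also have "\<dots> = 2 * a\<^sup>2 * prob S - a * expectation Y + 2 * expectation X"
    using iX iY iS Sm by (simp add: integral_indicator emeasure_eq_measure)
  finally have VE0: "expectation (\<lambda>x. (Y x)\<^sup>2) \<le> 2 * a\<^sup>2 * prob S + 2 * expectation X"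
    using assms(3) by simp
  have var: "variance Y = expectation (\<lambda>x. (Y x)\<^sup>2)" using assms(3) by simp
  show ?thesis
    unfolding var S_def[symmetric]
    by (rule arith_final[OF a th measure_nonneg[of M S] EY2[unfolded B0_def] VE0 EX[unfolded B1_def]])
qed

end
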